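(* Let $K_m$ and $L_n$ be regular languages over the same alphabet $\Sigma$ with state complexities $m$ and $n$ respectively. Then the state complexities of $K_m\setminus L_n^R$ and of $L_n^R\setminus K_m$ are each at most $m2^n-(m-1)$, and the state complexity of $K_m\oplus L_n^R$ is at most $m2^n$.
   Context: The state complexity of a regular language is the number of states of its minimal complete deterministic finite automaton. $L^R$ denotes the reversal of $L$, i.e. the set of all words of $L$ written backwards. $K\setminus L$ is set difference and $K\oplus L=(K\setminus L)\cup(L\setminus K)$ is symmetric difference. *)

theory Defs
  imports Main
begin

text \<open>States are natural numbers (any finite DFA can be renamed to such a one).\<close>

definition dfa :: "'a set \<Rightarrow> nat set \<Rightarrow> nat \<Rightarrow> (nat \<Rightarrow> 'a \<Rightarrow> nat) \<Rightarrow> nat set \<Rightarrow> bool" where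
  "dfa Sig Q q0 delta F \<longleftrightarrow>
     finite Q \<and> q0 \<in> Q \<and> (\<forall>q\<in>Q. \<forall>a\<in>Sig. delta q a \<in> Q) \<and> F \<subseteq> Q"

definition dfa_lang :: "'a set \<Rightarrow> nat \<Rightarrow> (nat \<Rightarrow> 'a \<Rightarrow> nat) \<Rightarrow> nat set \<Rightarrow> 'a list set" where
  "dfa_lang Sig q0 delta F = {w \<in> lists Sig. foldl delta q0 w \<in> F}"

definition regular :: "'a set \<Rightarrow> 'a list set \<Rightarrow> bool" where
  "regular Sig L \<longleftrightarrow>
     (\<exists>Q q0 delta F. dfa Sig Q q0 delta F \<and> dfa_lang Sig q0 delta F = L)"

definition state_complexity :: "'a set \<Rightarrow> 'a list set \<Rightarrow> nat" where
  "state_complexity Sig L =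
     (LEAST n. \<exists>Q q0 delta F. dfa Sig Q q0 delta F \<and> dfa_lang Sig q0 delta F = L \<and> card Q = n)"

definition lang_rev :: "'a list set \<Rightarrow> 'a list set" where
  "lang_rev L = rev ` L"

end

theory Submission
  imports Defs
begin

lemma sc_le:
  fixes Q :: "'b set" and d :: "'b \<Rightarrow> 'a \<Rightarrow> 'b"
  assumes fin: "finite Q" and q0: "q0 \<in> Q" and cl: "\<forall>q\<in>Q. \<forall>a\<in>Sig. d q a \<in> Q"
  shows "regular Sig {w\<in>lists Sig. foldl d q0 w \<in> F}
       \<and> state_complexity Sig {w\<in>lists Sig. foldl d q0 w \<in> F} \<le> card Q"
proof -
  obtain f where bij: "bij_betw f Q {0..<card Q}" using ex_bij_betw_finite_nat[OF fin] by blast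
  define g where "g = inv_into Q f"
  define d' where "d' = (\<lambda>i a. f (d (g i) a))"
  define F' where "F' = f ` (F \<inter> Q)"
  have inj: "inj_on f Q" using bij bij_betw_def by blast
  have gf: "\<And>q. q \<in> Q \<Longrightarrow> g (f q) = q" unfolding g_def using inj by simp
  have run: "\<And>q. q \<in> Q \<Longrightarrow> foldl d' (f q) w = f (foldl d q w) \<and> foldl d q w \<in> Q"
    if "w \<in> lists Sig" for w
    using that
  proof (induction w)
    case Nil then show ?case by simp
  next
    case (Cons a w)
    then have "d q a \<in> Q" using cl by auto
    then show ?case using Cons gf by (simp add: d'_def)
  qed
  have dfa: "dfa Sig {0..<card Q} (f q0) d' F'"
    unfolding dfa_def
  proof (intro conjI ballI)
    show "f q0 \<in> {0..<card Q}" using bij q0 bij_betwE by blast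
  next
    fix i a assume i: "i \<in> {0..<card Q}" and a: "a \<in> Sig"
    have "g i \<in> Q" unfolding g_def using bij i
      by (metis bij_betw_def inv_into_into)
    then show "d' i a \<in> {0..<card Q}" using cl a bij bij_betwE unfolding d'_def by blast
  next
    show "F' \<subseteq> {0..<card Q}" unfolding F'_def using bij bij_betwE by blast
  qed simp
  have lang: "dfa_lang Sig (f q0) d' F' = {w\<in>lists Sig. foldl d q0 w \<in> F}"
    unfolding dfa_lang_def
  proof (intro Collect_cong conj_cong refl)
    fix w assume w: "w \<in> lists Sig"
    have r: "foldl d' (f q0) w = f (foldl d q0 w)" "foldl d q0 w \<in> Q" using run[OF w q0] by auto
    show "(foldl d' (f q0) w \<in> F') = (foldl d q0 w \<in> F)"
      unfolding r F'_def using r(2) inj by (auto simp: inj_on_image_mem_iff)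
  qed
  have "state_complexity Sig {w\<in>lists Sig. foldl d q0 w \<in> F} \<le> card {0..<card Q}"
    unfolding state_complexity_def using dfa lang by (intro Least_le) blast
  then show ?thesis using dfa lang unfolding regular_def by auto
qed

lemma sc_merge:
  fixes Q :: "'b set" and d :: "'b \<Rightarrow> 'a \<Rightarrow> 'b"
  assumes fin: "finite Q" and q0: "q0 \<in> Q" and cl: "\<forall>q\<in>Q. \<forall>a\<in>Sig. d q a \<in> Q"
    and cQ: "c ` Q \<subseteq> Q"
    and cd: "\<forall>x\<in>Q. \<forall>a\<in>Sig. c (d (c x) a) = c (d x a)"
    and cF: "\<forall>x\<in>Q. (c x \<in> F \<longleftrightarrow> x \<in> F)"
  shows "regular Sig {w\<in>lists Sig. foldl d q0 w \<in> F}
       \<and> state_complexity Sig {w\<in>lists Sig. foldl d q0 w \<in> F} \<le> card (c ` Q)"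
proof -
  define d' where "d' = (\<lambda>x a. c (d x a))"
  have cl': "\<forall>q\<in>c ` Q. \<forall>a\<in>Sig. d' q a \<in> c ` Q"
    unfolding d'_def using cQ cl by blast
  have run: "\<And>x. x \<in> Q \<Longrightarrow> foldl d' (c x) w = c (foldl d x w) \<and> foldl d x w \<in> Q"
    if "w \<in> lists Sig" for w
    using that
  proof (induction w)
    case Nil then show ?case by simp
  next
    case (Cons a w)
    then have "d x a \<in> Q" "c (d (c x) a) = c (d x a)" using cl cd by auto
    then show ?case using Cons by (simp add: d'_def)
  qed
  have lang: "{w\<in>lists Sig. foldl d' (c q0) w \<in> F} = {w\<in>lists Sig. foldl d q0 w \<in> F}"
  proof (intro Collect_cong conj_cong refl)
    fix w assume w: "w \<in> lists Sig"
    show "(foldl d' (c q0) w \<in> F) = (foldl d q0 w \<in> F)"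
      using run[OF w q0] cF by auto
  qed
  show ?thesis using sc_le[OF finite_imageI[OF fin] imageI[OF q0] cl', of F] lang by simp
qed


lemma foldl_cl:
  assumes "\<forall>q\<in>Q. \<forall>a\<in>Sig. d q a \<in> Q"
  shows "w \<in> lists Sig \<Longrightarrow> q \<in> Q \<Longrightarrow> foldl d q w \<in> Q"
  using assms by (induction w arbitrary: q) auto

lemma min_dfa:
  assumes "regular Sig K"
  obtains Q q0 d F where "dfa Sig Q q0 d F" "dfa_lang Sig q0 d F = K"
    "card Q = state_complexity Sig K"
proof -
  have "\<exists>n Q q0 d F. dfa Sig Q q0 d F \<and> dfa_lang Sig q0 d F = K \<and> card Q = n"
    using assms unfolding regular_def by blast
  then have "\<exists>Q q0 d F. dfa Sig Q q0 d F \<and> dfa_lang Sig q0 d F = K \<and> card Q = state_complexity Sig K"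
    unfolding state_complexity_def by (rule LeastI_ex)
  then show ?thesis using that by blast
qed

theorem proposition1:
  fixes Sig :: "'a set" and K L :: "'a list set" and m n :: nat
  assumes "finite Sig"
    and "regular Sig K" and "regular Sig L"
    and "state_complexity Sig K = m" and "state_complexity Sig L = n"
  shows "regular Sig (K - lang_rev L)
       \<and> state_complexity Sig (K - lang_rev L) \<le> m * 2 ^ n - (m - 1)
       \<and> regular Sig (lang_rev L - K)
       \<and> state_complexity Sig (lang_rev L - K) \<le> m * 2 ^ n - (m - 1)
       \<and> regular Sig ((K - lang_rev L) \<union> (lang_rev L - K))
       \<and> state_complexity Sig ((K - lang_rev L) \<union> (lang_rev L - K)) \<le> m * 2 ^ n"
proof -
  obtain QK qK dK FK where dK: "dfa Sig QK qK dK FK" and lK: "dfa_lang Sig qK dK FK = K"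
    and cK: "card QK = m" using min_dfa[OF assms(2)] assms(4) by metis
  obtain QL qL dL FL where dL: "dfa Sig QL qL dL FL" and lL: "dfa_lang Sig qL dL FL = L"
    and cL: "card QL = n" using min_dfa[OF assms(3)] assms(5) by metis
  have finK: "finite QK" and qK: "qK \<in> QK" and clK: "\<forall>q\<in>QK. \<forall>a\<in>Sig. dK q a \<in> QK"
    using dK unfolding dfa_def by auto
  have finL: "finite QL" and qL: "qL \<in> QL" and clL: "\<forall>q\<in>QL. \<forall>a\<in>Sig. dL q a \<in> QL"
    and FL: "FL \<subseteq> QL"
    using dL unfolding dfa_def by auto
  define pre where "pre = (\<lambda>a S. {q\<in>QL. dL q a \<in> S})"
  define del where "del = (\<lambda>(p, S) a. (dK p a, pre a S))"
  define Q where "Q = QK \<times> Pow QL"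
  define x0 where "x0 = (qK, FL)"
  have finQ: "finite Q" unfolding Q_def using finK finL by simp
  have x0: "x0 \<in> Q" unfolding x0_def Q_def using qK FL by simp
  have preQ: "\<And>a. a \<in> Sig \<Longrightarrow> pre a QL = QL" unfolding pre_def using clL by auto
  have pre0: "\<And>a. pre a {} = {}" unfolding pre_def by auto
  have cl: "\<forall>q\<in>Q. \<forall>a\<in>Sig. del q a \<in> Q"
    unfolding Q_def del_def pre_def using clK by auto
  have run: "foldl del (p, S) w = (foldl dK p w, {q\<in>QL. foldl dL q (rev w) \<in> S})"
    if "w \<in> lists Sig" "S \<subseteq> QL" for w p S
    using that
  proof (induction w arbitrary: p S)
    case Nil then show ?case by auto
  next
    case (Cons a w)
    have rw: "rev w \<in> lists Sig" using Cons by (auto simp: in_lists_conv_set)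
    have "{q\<in>QL. foldl dL q (rev w) \<in> pre a S} = {q\<in>QL. foldl dL q (rev (a#w)) \<in> S}"
      using foldl_cl[OF clL rw] Cons unfolding pre_def by auto
    moreover have "pre a S \<subseteq> QL" unfolding pre_def by auto
    ultimately show ?case using Cons by (simp add: del_def)
  qed
  have inK: "w \<in> K \<longleftrightarrow> w \<in> lists Sig \<and> fst (foldl del x0 w) \<in> FK" for w
  proof (cases "w \<in> lists Sig")
    case True
    show ?thesis using lK run[OF True FL] True unfolding dfa_lang_def x0_def by auto
  next
    case False
    then show ?thesis using lK unfolding dfa_lang_def by auto
  qed
  have inL: "w \<in> lang_rev L \<longleftrightarrow> w \<in> lists Sig \<and> qL \<in> snd (foldl del x0 w)" for w
  proof -
    have "w \<in> lang_rev L \<longleftrightarrow> rev w \<in> L" unfolding lang_rev_def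
      by (metis image_iff rev_rev_ident)
    also have "\<dots> \<longleftrightarrow> w \<in> lists Sig \<and> foldl dL qL (rev w) \<in> FL"
      using lL unfolding dfa_lang_def by auto
    also have "\<dots> \<longleftrightarrow> w \<in> lists Sig \<and> qL \<in> snd (foldl del x0 w)"
    proof (cases "w \<in> lists Sig")
      case True
      show ?thesis using qL run[OF True FL] True unfolding x0_def by auto
    qed simp
    finally show ?thesis .
  qed
  have m1: "m \<ge> 1" using qK finK cK by (metis One_nat_def Suc_leI card_gt_0_iff empty_iff)
  have cardQ: "card Q = m * 2 ^ n" unfolding Q_def using cK cL finK finL
    by (simp add: card_cartesian_product card_Pow)
  have cardP: "card (Pow QL - {QL}) = 2 ^ n - 1" using finL cL by (simp add: card_Pow)
  have arith: "m * (2 ^ n - 1) + 1 = m * 2 ^ n - (m - 1)"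
  proof -
    have "m * (2 ^ n - 1) = m * 2 ^ n - m" by (simp add: diff_mult_distrib2)
    moreover have "m \<le> m * 2 ^ n" by simp
    ultimately show ?thesis using m1 by linarith
  qed
  define F1 where "F1 = {x. fst x \<in> FK \<and> qL \<notin> snd x}"
  define c1 where "c1 = (\<lambda>(p, S). if S = QL then (qK, QL) else (p, S))"
  have e1: "K - lang_rev L = {w\<in>lists Sig. foldl del x0 w \<in> F1}"
    unfolding F1_def using inK inL by (auto split: prod.splits)
  have r1: "regular Sig (K - lang_rev L) \<and> state_complexity Sig (K - lang_rev L) \<le> card (c1 ` Q)"
    unfolding e1
  proof (rule sc_merge[OF finQ x0 cl])
    show "c1 ` Q \<subseteq> Q" unfolding c1_def Q_def using qK by (auto split: if_splits)
    show "\<forall>x\<in>Q. \<forall>a\<in>Sig. c1 (del (c1 x) a) = c1 (del x a)"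
      unfolding c1_def Q_def del_def using preQ by (auto split: if_splits)
    show "\<forall>x\<in>Q. (c1 x \<in> F1) = (x \<in> F1)"
      unfolding c1_def Q_def F1_def using qL by (auto split: if_splits)
  qed
  have "c1 ` Q \<subseteq> QK \<times> (Pow QL - {QL}) \<union> {(qK, QL)}"
    unfolding c1_def Q_def by (auto split: if_splits)
  then have "card (c1 ` Q) \<le> card (QK \<times> (Pow QL - {QL}) \<union> {(qK, QL)})"
    using finK finL by (intro card_mono) auto
  also have "\<dots> \<le> card (QK \<times> (Pow QL - {QL})) + card {(qK, QL)}" by (rule card_Un_le)
  also have "\<dots> = m * (2 ^ n - 1) + 1" using cK cardP by (simp add: card_cartesian_product)
  finally have b1: "card (c1 ` Q) \<le> m * 2 ^ n - (m - 1)" using arith by simp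
  define F2 where "F2 = {x. qL \<in> snd x \<and> fst x \<notin> FK}"
  define c2 where "c2 = (\<lambda>(p::nat, S::nat set). if S = {} then (qK, {}) else (p, S))"
  have e2: "lang_rev L - K = {w\<in>lists Sig. foldl del x0 w \<in> F2}"
    unfolding F2_def using inK inL by (auto split: prod.splits)
  have r2: "regular Sig (lang_rev L - K) \<and> state_complexity Sig (lang_rev L - K) \<le> card (c2 ` Q)"
    unfolding e2
  proof (rule sc_merge[OF finQ x0 cl])
    show "c2 ` Q \<subseteq> Q" unfolding c2_def Q_def using qK by (auto split: if_splits)
    show "\<forall>x\<in>Q. \<forall>a\<in>Sig. c2 (del (c2 x) a) = c2 (del x a)"
      unfolding c2_def Q_def del_def using pre0 by (auto split: if_splits)
    show "\<forall>x\<in>Q. (c2 x \<in> F2) = (x \<in> F2)"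
      unfolding c2_def Q_def F2_def by (auto split: if_splits)
  qed
  have "c2 ` Q \<subseteq> QK \<times> (Pow QL - {{}}) \<union> {(qK, {})}"
    unfolding c2_def Q_def by (auto split: if_splits)
  then have "card (c2 ` Q) \<le> card (QK \<times> (Pow QL - {{}}) \<union> {(qK, {})})"
    using finK finL by (intro card_mono) auto
  also have "\<dots> \<le> card (QK \<times> (Pow QL - {{}})) + card {(qK, {}::nat set)}" by (rule card_Un_le)
  also have "\<dots> = m * (2 ^ n - 1) + 1" using cK finL cL by (simp add: card_cartesian_product card_Pow)
  finally have b2: "card (c2 ` Q) \<le> m * 2 ^ n - (m - 1)" using arith by simp
  define F3 where "F3 = {x. (fst x \<in> FK) \<noteq> (qL \<in> snd x)}"
  have e3: "(K - lang_rev L) \<union> (lang_rev L - K) = {w\<in>lists Sig. foldl del x0 w \<in> F3}"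
    unfolding F3_def using inK inL by (auto split: prod.splits)
  have r3: "regular Sig ((K - lang_rev L) \<union> (lang_rev L - K))
      \<and> state_complexity Sig ((K - lang_rev L) \<union> (lang_rev L - K)) \<le> card Q"
    unfolding e3 by (rule sc_le[OF finQ x0 cl])
  show ?thesis using r1 b1 r2 b2 r3 cardQ by linarith
qed

end
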